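(* Let $L\ge 2$, let $f\in C^2(\mathbb{R}^n,\mathbb{R})$ with $\nabla_x f(0)\neq 0$, and define $F(w_1,\dots,w_L):=f\left(\prod_{i=1}^L w_i\right)$ for $w_1,\dots,w_L\in\mathbb{R}^n$ (entrywise product). Let $$S:=\{(w_1,\dots,w_L): \text{there exist } i\neq j \text{ in } [L] \text{ with } w_i=w_j=0,\ \text{and } w_k \text{ has all entries nonzero for every } k\notin\{i,j\}\}.$$ Then every point of $S$ is a saddle point of $F$.
   Context: A saddle point of a function $F\in C^2$ is a point where $\nabla F=0$ and the Hessian $\nabla^2 F$ is not positive semidefinite. The map $x=g(w)=\prod_{i=1}^L w_i$ is the deep diagonal reparameterization. *)

theory Defs
  imports "HOL-Analysis.Analysis"
begin

definition C2 :: "('a::euclidean_space \<Rightarrow> real) \<Rightarrow> bool" where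
  "C2 f \<longleftrightarrow> (\<exists>Df D2f.
      (\<forall>x. (f has_derivative blinfun_apply (Df x)) (at x)) \<and>
      (\<forall>x. (Df has_derivative blinfun_apply (D2f x)) (at x)) \<and>
      continuous_on UNIV (D2f :: 'a \<Rightarrow> 'a \<Rightarrow>\<^sub>L ('a \<Rightarrow>\<^sub>L real)))"

definition saddle_point :: "('a::euclidean_space \<Rightarrow> real) \<Rightarrow> 'a \<Rightarrow> bool" where
  "saddle_point F x \<longleftrightarrow> (\<exists>DF (H :: 'a \<Rightarrow> ('a \<Rightarrow>\<^sub>L real)).
      (\<forall>y. (F has_derivative blinfun_apply (DF y)) (at y)) \<and>
      (DF has_derivative H) (at x) \<and>
      DF x = 0 \<and>
      \<not> (\<forall>v. blinfun_apply (H v) v \<ge> 0))"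

definition diag_prod :: "real ^ 'n ^ 'l \<Rightarrow> real ^ 'n" where
  "diag_prod w = (\<chi> m. \<Prod>i\<in>UNIV. w $ i $ m)"

end

theory Submission
  imports Defs
begin

definition cc :: "'l::finite \<Rightarrow> 'n::finite \<Rightarrow> real ^ 'n ^ 'l \<Rightarrow> real" where
  "cc i m y = (\<Prod>j\<in>UNIV - {i}. y $ j $ m)"

definition BB :: "'l::finite \<Rightarrow> 'n::finite \<Rightarrow> (real ^ 'n ^ 'l) \<Rightarrow>\<^sub>L (real ^ 'n)" where
  "BB i m = Blinfun (\<lambda>h. h $ i $ m *\<^sub>R axis m 1)"

lemma BB_apply: "blinfun_apply (BB i m) h = h $ i $ m *\<^sub>R axis m 1"
  for i :: "'l::finite" and m :: "'n::finite" and h :: "real ^ 'n ^ 'l"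
proof -
  have "bounded_linear (\<lambda>h::real ^ 'n ^ 'l. h $ i $ m *\<^sub>R axis m (1::real))"
    by (rule bounded_linear_compose[OF bounded_linear_scaleR_left, of "\<lambda>h. h$i$m"])
       (rule bounded_linear_compose[OF bounded_linear_vec_nth bounded_linear_vec_nth])
  then show ?thesis unfolding BB_def by (simp add: bounded_linear_Blinfun_apply)
qed

definition DgL :: "real ^ 'n::finite ^ 'l::finite \<Rightarrow> (real ^ 'n ^ 'l) \<Rightarrow>\<^sub>L (real ^ 'n)" where
  "DgL y = (\<Sum>m\<in>UNIV. \<Sum>i\<in>UNIV. cc i m y *\<^sub>R BB i m)"

lemma DgL_apply: "blinfun_apply (DgL y) h = (\<Sum>m\<in>UNIV. (\<Sum>i\<in>UNIV. h $ i $ m * cc i m y) *\<^sub>R axis m 1)"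
  unfolding DgL_def by (simp add: blinfun.sum_left blinfun.scaleR_left BB_apply scaleR_sum_left mult.commute)

lemma sum_axis_nth: "(\<Sum>m\<in>UNIV. (a m :: real) *\<^sub>R axis m 1) $ k = a k"
proof -
  have "(\<Sum>m\<in>UNIV. (a m :: real) *\<^sub>R axis m 1) $ k = (\<Sum>m\<in>UNIV. if m = k then a m else 0)"
  proof -
    have "\<And>x. a x * (if k = x then 1 else 0) = (if x = k then a x else 0)" by simp
    then show ?thesis by (simp add: axis_def)
  qed
  then show ?thesis by simp
qed

lemma diag_prod_sum: "diag_prod y = (\<Sum>m\<in>UNIV. (\<Prod>i\<in>UNIV. y $ i $ m) *\<^sub>R axis m 1)"
  by (simp only: vec_eq_iff sum_axis_nth) (simp add: diag_prod_def)

lemma nth_deriv: "((\<lambda>y::real ^ 'n ^ 'l. y $ i $ m) has_derivative (\<lambda>h. h $ i $ m)) F"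
  by (intro bounded_linear_imp_has_derivative bounded_linear_compose[OF bounded_linear_vec_nth]
        bounded_linear_vec_nth)

lemma g_deriv: "(diag_prod has_derivative blinfun_apply (DgL y)) (at y)"
proof -
  have "((\<lambda>y. \<Sum>m\<in>UNIV. (\<Prod>i\<in>UNIV. y $ i $ m) *\<^sub>R axis m (1::real)) has_derivative
     (\<lambda>h. \<Sum>m\<in>UNIV. (\<Sum>i\<in>UNIV. h $ i $ m * (\<Prod>j\<in>UNIV - {i}. y $ j $ m)) *\<^sub>R axis m 1)) (at y)"
    by (intro has_derivative_sum has_derivative_scaleR_left has_derivative_prod nth_deriv)
  then show ?thesis
    by (simp add: diag_prod_sum[abs_def] DgL_apply[abs_def] cc_def)
qed

lemma sum_axis_eq: "(\<Sum>m\<in>UNIV. (if m = m0 then X else 0) *\<^sub>R axis m (1::real)) = X *\<^sub>R axis m0 1"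
proof -
  have "\<And>m. (if m = m0 then X else 0) *\<^sub>R axis m (1::real) = (if m = m0 then X *\<^sub>R axis m0 1 else 0)"
    by simp
  then show ?thesis by simp
qed

theorem theorem2:
  fixes f :: "real ^ 'n \<Rightarrow> real" and w :: "real ^ 'n ^ 'l::finite"
  assumes L2: "CARD('l) \<ge> 2"
    and f_C2: "C2 f"
    and grad0: "frechet_derivative f (at 0) \<noteq> (\<lambda>_. 0)"
    and inS: "\<exists>i j. i \<noteq> j \<and> w $ i = 0 \<and> w $ j = 0 \<and>
                (\<forall>k. k \<noteq> i \<and> k \<noteq> j \<longrightarrow> (\<forall>m. w $ k $ m \<noteq> 0))"
  shows "saddle_point (\<lambda>v. f (diag_prod v)) w"
proof -
  obtain Df D2f where Df: "\<And>x. (f has_derivative blinfun_apply (Df x)) (at x)"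
    and D2f: "\<And>x. (Df has_derivative blinfun_apply (D2f x)) (at x)"
    using f_C2 unfolding C2_def by blast
  obtain i j where ij: "i \<noteq> j" "w $ i = 0" "w $ j = 0"
    and nz: "\<And>k m. k \<noteq> i \<Longrightarrow> k \<noteq> j \<Longrightarrow> w $ k $ m \<noteq> 0"
    using inS by blast
  have cc0: "cc k m w = 0" for k m
  proof (cases "k = i")
    case True
    then have "j \<in> UNIV - {k}" using ij by auto
    then show ?thesis unfolding cc_def using ij by (auto simp: prod_zero_iff intro!: bexI[of _ j])
  next
    case False
    then have "i \<in> UNIV - {k}" by auto
    then show ?thesis unfolding cc_def using ij by (auto simp: prod_zero_iff intro!: bexI[of _ i])
  qed
  have DgL0: "DgL w = 0" unfolding DgL_def by (simp add: cc0)
  have g0: "diag_prod w = 0"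
    unfolding diag_prod_def vec_eq_iff using ij by (auto simp: prod_zero_iff intro!: exI[of _ i])
  define DF where "DF y = Df (diag_prod y) o\<^sub>L DgL y" for y :: "real ^ 'n ^ 'l"
  have DFd: "((\<lambda>v. f (diag_prod v)) has_derivative blinfun_apply (DF y)) (at y)" for y
  proof -
    have "((\<lambda>v. f (diag_prod v)) has_derivative (\<lambda>h. Df (diag_prod y) (DgL y h))) (at y)"
      by (rule has_derivative_compose[OF g_deriv Df])
    moreover have "blinfun_apply (DF y) = (\<lambda>h. Df (diag_prod y) (DgL y h))"
      unfolding DF_def by (rule ext) simp
    ultimately show ?thesis by simp
  qed
  define DDg where "DDg h = (\<Sum>m\<in>UNIV. \<Sum>k\<in>UNIV.
      (\<Sum>k'\<in>UNIV - {k}. h $ k' $ m * (\<Prod>l\<in>UNIV - {k} - {k'}. w $ l $ m)) *\<^sub>R BB k m)" for h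
  have DgLd: "(DgL has_derivative DDg) (at w)"
    unfolding DgL_def[abs_def] cc_def DDg_def
    by (intro has_derivative_sum has_derivative_scaleR_left has_derivative_prod nth_deriv)
  have Dfgd: "((\<lambda>y. Df (diag_prod y)) has_derivative (\<lambda>h. D2f (diag_prod w) (DgL w h))) (at w)"
    by (rule has_derivative_compose[OF g_deriv D2f])
  define H where "H h = (Df (diag_prod w) o\<^sub>L DDg h) + (D2f (diag_prod w) (DgL w h) o\<^sub>L DgL w)" for h
  have DFH: "(DF has_derivative H) (at w)"
    unfolding DF_def[abs_def] H_def[abs_def]
    by (rule bounded_bilinear.FDERIV[OF bounded_bilinear_blinfun_compose Dfgd DgLd])
  have DFw: "DF w = 0" unfolding DF_def DgL0 by simp
  have Df0: "blinfun_apply (Df 0) = frechet_derivative f (at 0)"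
    by (rule frechet_derivative_at[OF Df])
  obtain m0 where d: "Df 0 (axis m0 1) \<noteq> 0"
  proof (rule ccontr)
    assume "\<not> thesis"
    then have z: "\<And>m. Df 0 (axis m 1) = 0" using that by blast
    have "Df 0 x = 0" for x
    proof -
      have "Df 0 x = Df 0 (\<Sum>m\<in>UNIV. x $ m *\<^sub>R axis m 1)"
        using basis_expansion[of x] by (simp add: scalar_mult_eq_scaleR)
      also have "\<dots> = 0" by (simp add: blinfun.sum_right blinfun.scaleR_right z)
      finally show ?thesis .
    qed
    then show False using grad0 Df0 by auto
  qed
  define P where "P = (\<Prod>l\<in>UNIV - {i} - {j}. w $ l $ m0)"
  have Pnz: "P \<noteq> 0" unfolding P_def using nz by (auto simp: prod_zero_iff)
  define dd where "dd = Df 0 (axis m0 1)"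
  define b where "b = - (P * dd)"
  define v :: "real ^ 'n ^ 'l" where
    "v = (\<chi> k. if k = i then axis m0 1 else if k = j then b *\<^sub>R axis m0 1 else 0)"
  have vnth: "v $ k $ m = (if m = m0 then (if k = i then 1 else if k = j then b else 0) else 0)" for k m
    unfolding v_def using ij(1) by (auto simp: axis_def)
  have inner: "(\<Sum>k'\<in>UNIV - {k}. v $ k' $ m0 * (\<Prod>l\<in>UNIV - {k} - {k'}. w $ l $ m0)) * v $ k $ m0
      = (if k = i then b * P else 0) + (if k = j then b * P else 0)" for k
  proof -
    consider "k = i" | "k = j" | "k \<noteq> i" "k \<noteq> j" by blast
    then show ?thesis
    proof cases
      case 1
      have "(\<Sum>k'\<in>UNIV - {k}. v $ k' $ m0 * (\<Prod>l\<in>UNIV - {k} - {k'}. w $ l $ m0))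
          = (\<Sum>k'\<in>UNIV - {k}. if k' = j then b * P else 0)"
        using 1 by (intro sum.cong) (auto simp: vnth P_def)
      also have "\<dots> = b * P" using 1 ij(1) by simp
      finally show ?thesis using 1 ij(1) by (simp add: vnth)
    next
      case 2
      have "(\<Sum>k'\<in>UNIV - {k}. v $ k' $ m0 * (\<Prod>l\<in>UNIV - {k} - {k'}. w $ l $ m0))
          = (\<Sum>k'\<in>UNIV - {k}. if k' = i then P else 0)"
        using 2 ij(1) by (intro sum.cong) (auto simp: vnth P_def Diff_insert2[symmetric] insert_commute)
      also have "\<dots> = P" using 2 ij(1) by simp
      finally show ?thesis using 2 ij(1) by (simp add: vnth)
    next
      case 3
      then show ?thesis by (simp add: vnth)
    qed
  qed
  have DDgv: "DDg v v = (2 * b * P) *\<^sub>R axis m0 1"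
  proof -
    have "DDg v v = (\<Sum>m\<in>UNIV. (\<Sum>k\<in>UNIV.
      (\<Sum>k'\<in>UNIV - {k}. v $ k' $ m * (\<Prod>l\<in>UNIV - {k} - {k'}. w $ l $ m)) * v $ k $ m) *\<^sub>R axis m 1)"
      unfolding DDg_def by (simp add: blinfun.sum_left blinfun.scaleR_left BB_apply scaleR_sum_left sum_distrib_right)
    also have "\<dots> = (\<Sum>m\<in>UNIV. (if m = m0 then 2 * b * P else 0) *\<^sub>R axis m 1)"
    proof (intro sum.cong refl)
      fix m
      show "(\<Sum>k\<in>UNIV.
      (\<Sum>k'\<in>UNIV - {k}. v $ k' $ m * (\<Prod>l\<in>UNIV - {k} - {k'}. w $ l $ m)) * v $ k $ m) *\<^sub>R axis m 1
        = (if m = m0 then 2 * b * P else 0) *\<^sub>R axis m (1::real)"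
      proof (cases "m = m0")
        case True
        then show ?thesis by (simp add: inner sum.distrib)
      next
        case False
        then show ?thesis by (simp add: vnth)
      qed
    qed
    also have "\<dots> = (2 * b * P) *\<^sub>R axis m0 1" by (rule sum_axis_eq)
    finally show ?thesis .
  qed
  have "H v v = 2 * b * P * dd"
    unfolding H_def DgL0 g0 using DDgv by (simp add: blinfun.scaleR_right dd_def)
  also have "\<dots> = - 2 * (P * dd)^2" unfolding b_def by (simp add: power2_eq_square)
  also have "\<dots> < 0" using Pnz d unfolding dd_def by simp
  finally have neg: "H v v < 0" .
  show ?thesis unfolding saddle_point_def
    using DFd DFH DFw neg by (intro exI[of _ DF] exI[of _ H]) (auto simp: not_le)
qed

end
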